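(* Let $\varphi=\frac{1+\sqrt5}{2}$ and write $[\varphi]_q=\sum_{k\geq0}\phi_kq^k$. Let $(a_n)_{n\geq0}$ be the generalized Catalan numbers, defined by $a_0=a_1=1$ and $$a_n=a_{n-1}+\sum_{k=1}^{n-2}a_ka_{n-2-k}\qquad(n\geq2).$$ These are the numbers $1,1,1,2,4,8,17,37,82,185,\ldots$; equivalently, their generating function $A(x)=\sum_n a_nx^n$ satisfies $A=1+xA+x^2A^2-x^2A$. Then $$\phi_k=(-1)^ka_{k-1}\qquad\text{for all }k\geq2,$$ and moreover $\phi_0=1$, $\phi_1=0$.
   Context: For an integer $a\geq1$ put $[a]_q=1+q+\cdots+q^{a-1}$ and $[a]_{q^{-1}}=1+q^{-1}+\cdots+q^{-(a-1)}$. Every rational number $r/s>1$ has a unique even-length regular continued fraction $r/s=[a_1,\ldots,a_{2m}]$ with $a_i\in\mathbb{Z}_{\geq1}$. Its $q$-deformation is the rational function $$\left[\tfrac{r}{s}\right]_q=[a_1]_q+\cfrac{q^{a_1}}{[a_2]_{q^{-1}}+\cfrac{q^{-a_2}}{[a_3]_q+\cfrac{q^{a_3}}{\ddots+\cfrac{q^{a_{2m-1}}}{[a_{2m}]_{q^{-1}}}}}}.$$ One also sets $[1]_q=1$. Each $[r/s]_q$ is identified with its Taylor expansion at $q=0$. For an irrational real number $x>1$ with continued fraction $x=[a_1,a_2,\ldots]$ and convergents $x_n=[a_1,\ldots,a_n]$, define $$[x]_q:=\sum_{k\geq0}\varkappa_kq^k,\qquad \varkappa_k=\lim_{n\to\infty}\bigl(\text{coefficient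 of }q^k\text{ in }[x_n]_q\bigr).$$ These limits exist and are eventually attained. Here $\varphi=[1,1,1,\ldots]$. *)

theory Defs
  imports "HOL-Analysis.Analysis" "HOL-Computational_Algebra.Formal_Laurent_Series"
begin

definition qint :: "nat \<Rightarrow> rat fls" where
  "qint a = (\<Sum>i<a. fls_X powi (int i))"

definition qint_inv :: "nat \<Rightarrow> rat fls" where
  "qint_inv a = (\<Sum>i<a. fls_X powi (- int i))"

(* q-deformed continued fraction; the flag says whether the current entry is at an
   odd position (uses q) or an even position (uses q^{-1}) *)
fun qcf :: "bool \<Rightarrow> nat list \<Rightarrow> rat fls" where
  "qcf s [] = 0"
| "qcf s [a] = (if s then qint a else qint_inv a)"
| "qcf s (a # b # rest) =
     (if s then qint a + fls_X powi (int a) / qcf False (b # rest)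
           else qint_inv a + fls_X powi (- int a) / qcf True (b # rest))"

fun cf_value :: "nat list \<Rightarrow> rat" where
  "cf_value [] = 0"
| "cf_value [a] = of_nat a"
| "cf_value (a # b # rest) = of_nat a + 1 / cf_value (b # rest)"

definition even_cf :: "rat \<Rightarrow> nat list" where
  "even_cf x = (THE xs. xs \<noteq> [] \<and> even (length xs) \<and> (\<forall>a\<in>set xs. a \<ge> 1) \<and> cf_value xs = x)"

(* [r/s]_q for rationals r/s \<ge> 1, with [1]_q = 1 *)
definition qrat :: "rat \<Rightarrow> rat fls" where
  "qrat x = (if x = 1 then 1 else qcf True (even_cf x))"

fun cf_rem :: "real \<Rightarrow> nat \<Rightarrow> real" where
  "cf_rem x 0 = x"
| "cf_rem x (Suc n) = 1 / (cf_rem x n - of_int \<lfloor>cf_rem x n\<rfloor>)"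

definition cf_term :: "real \<Rightarrow> nat \<Rightarrow> nat" where
  "cf_term x n = nat \<lfloor>cf_rem x n\<rfloor>"

(* n-th convergent x_n = [a_1,...,a_n] (n \<ge> 1) *)
definition convergent :: "real \<Rightarrow> nat \<Rightarrow> rat" where
  "convergent x n = cf_value (map (cf_term x) [0..<n])"

(* k-th coefficient \<varkappa>_k of [x]_q for irrational x > 1 *)
definition qreal_coeff :: "real \<Rightarrow> nat \<Rightarrow> real" where
  "qreal_coeff x k = lim (\<lambda>n. real_of_rat (fls_nth (qrat (convergent x (Suc n))) (int k)))"

fun gcat :: "nat \<Rightarrow> nat" where
  "gcat 0 = 1"
| "gcat (Suc 0) = 1"
| "gcat (Suc (Suc m)) = gcat (Suc m) + (\<Sum>k\<in>{1..m}. gcat k * gcat (m - k))"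

end

theory Submission
  imports Defs
begin

unbundle fps_syntax


definition Bf :: "rat fps" where "Bf = Abs_fps (\<lambda>n. (-1)^n * of_nat (gcat n))"

lemma Bf_eq: "Bf = 1 - fps_X*Bf + fps_X^2*Bf^2 - fps_X^2*Bf"
proof (rule fps_ext)
  fix n
  show "Bf $ n = (1 - fps_X*Bf + fps_X^2*Bf^2 - fps_X^2*Bf) $ n"
  proof (cases n)
    case 0 then show ?thesis by (simp add: Bf_def fps_X_power_mult_nth)
  next
    case (Suc j)
    show ?thesis
    proof (cases j)
      case 0 then show ?thesis using Suc by (simp add: Bf_def fps_X_power_mult_nth)
    next
      case (Suc m)
      have sq: "(Bf^2) $ m = (-1)^m * (\<Sum>i=0..m. of_nat (gcat i * gcat (m-i)))"
        unfolding power2_eq_square fps_mult_nth sum_distrib_left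
        by (rule sum.cong) (auto simp: Bf_def power_add[symmetric])
      have rec: "(of_nat (gcat (Suc (Suc m))) :: rat) = of_nat (gcat (Suc m)) + (\<Sum>k=1..m. of_nat (gcat k * gcat (m-k)))"
        by simp
      have split: "(\<Sum>i=0..m. (of_nat (gcat i * gcat (m-i)) :: rat)) = of_nat (gcat m) + (\<Sum>k=1..m. of_nat (gcat k * gcat (m-k)))"
        by (simp add: sum.atLeast_Suc_atMost)
      show ?thesis using \<open>n = Suc j\<close> Suc sq rec split
        by (simp add: Bf_def fps_X_power_mult_nth algebra_simps)
    qed
  qed
qed

definition Tf :: "rat fls" where "Tf = fps_to_fls (1 + fps_X - fps_X * Bf)"

lemma Tf_fps_eq: "fps_X*(1 + fps_X - fps_X * Bf)^2 + (1 + fps_X - fps_X * Bf) - fps_X*(1 + fps_X - fps_X * Bf)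
     - fps_X^2*(1 + fps_X - fps_X * Bf) - 1 = (0::rat fps)"
proof -
  have "fps_X*(1 + fps_X - fps_X * Bf)^2 + (1 + fps_X - fps_X * Bf) - fps_X*(1 + fps_X - fps_X * Bf)
     - fps_X^2*(1 + fps_X - fps_X * Bf) - 1
     = - fps_X * (Bf - (1 - fps_X*Bf + fps_X^2*Bf^2 - fps_X^2*Bf))"
    by (simp add: algebra_simps power2_eq_square)
  then show ?thesis using Bf_eq by simp
qed

lemma Tf_eq: "fls_X*Tf^2 + Tf - fls_X*Tf - fls_X^2*Tf - 1 = 0"
proof -
  have "fps_to_fls (fps_X*(1 + fps_X - fps_X * Bf)^2 + (1 + fps_X - fps_X * Bf) - fps_X*(1 + fps_X - fps_X * Bf)
     - fps_X^2*(1 + fps_X - fps_X * Bf) - 1) = 0" using Tf_fps_eq by simp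
  then show ?thesis by (simp add: Tf_def fps_to_fls_power fls_times_fps_to_fls)
qed

lemma Tf_nth_neg: "k < 0 \<Longrightarrow> Tf $$ k = 0" by (simp add: Tf_def)
lemma Tf_nth0: "Tf $$ 0 = 1" by (simp add: Tf_def)
lemma Tf_nth1: "Tf $$ 1 = 0" by (simp add: Tf_def Bf_def)
lemma Tf_nth_ge2: "k \<ge> 2 \<Longrightarrow> Tf $$ int k = (-1)^k * of_nat (gcat (k-1))"
proof -
  assume k: "k \<ge> 2"
  have "Tf $$ int k = (1 + fps_X - fps_X*Bf) $ k" by (simp add: Tf_def)
  also have "\<dots> = (-1)^k * of_nat (gcat (k-1))"
    using k by (cases k; cases "k-1") (auto simp: Bf_def)
  finally show ?thesis .
qed



definition P :: "nat \<Rightarrow> rat fls" where "P n = qcf True (replicate (Suc n) 1)"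
definition Q :: "nat \<Rightarrow> rat fls" where "Q n = qcf False (replicate (Suc n) 1)"

lemma qint1: "qint (Suc 0) = 1" unfolding qint_def by simp
lemma qint_inv1: "qint_inv (Suc 0) = 1" unfolding qint_inv_def by simp

lemma P0: "P 0 = 1" by (simp add: P_def qint1)
lemma Q0: "Q 0 = 1" by (simp add: Q_def qint_inv1)
lemma PS: "P (Suc n) = 1 + fls_X / Q n" by (simp add: P_def Q_def qint1)
lemma QS: "Q (Suc n) = 1 + inverse fls_X / P n"
  by (simp add: P_def Q_def qint_inv1 power_int_minus)

lemma step_eq:
  fixes p X :: "'a::field"
  assumes p0: "p \<noteq> 0" and u: "X * p + 1 \<noteq> 0" and X: "X \<noteq> 0"
  shows "(1 + X / (1 + inverse X / p) - 1) * (X * p + 1) = X^2 * p"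
proof -
  have "1 + inverse X / p = (X * p + 1) / (X * p)"
    using X p0 by (simp add: field_simps)
  then show ?thesis using X p0 u by (simp add: field_simps power2_eq_square)
qed

lemma Tf_step: "(Tf - 1) * (fls_X * Tf + 1) = fls_X^2 * Tf"
  using Tf_eq by (simp add: algebra_simps power2_eq_square) 



definition J :: "nat \<Rightarrow> bool" where
  "J n \<longleftrightarrow> P n = Tf \<or> (int n \<le> fls_subdegree (P n - Tf) \<and> 1 \<le> fls_subdegree (P n - Tf))"

lemma J_coeff: assumes J: "J n" and k: "k < int n \<or> k \<le> 0" shows "P n $$ k = Tf $$ k"
proof (cases "P n = Tf")
  case True then show ?thesis by simp
next
  case False
  then have a: "int n \<le> fls_subdegree (P n - Tf)" "1 \<le> fls_subdegree (P n - Tf)" using J unfolding J_def by auto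
  have "k < fls_subdegree (P n - Tf)" using a k by auto
  then have "(P n - Tf) $$ k = 0" by (rule fls_eq0_below_subdegree)
  then show ?thesis by simp
qed

lemma unit0:
  fixes p :: "rat fls"
  assumes neg: "\<And>k. k < 0 \<Longrightarrow> p $$ k = 0" and c0: "p $$ 0 = 1"
  shows "fls_X * p + 1 \<noteq> 0 \<and> fls_subdegree (fls_X * p + 1) = 0"
proof -
  have p0: "p \<noteq> 0" using c0 by (intro fls_nonzeroI[of _ 0]) simp
  have sd: "0 \<le> fls_subdegree p" using neg by (rule fls_subdegree_ge0I)
  have z: "(fls_X * p) $$ k = 0" if "k < 1" for k
    using that sd p0 by (intro fls_times_nth_eq0) simp
  have c: "(fls_X * p + 1) $$ 0 = 1" using z[of 0] by simp
  have nz: "fls_X * p + 1 \<noteq> 0" using c by (intro fls_nonzeroI[of _ 0]) simp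
  moreover have "fls_subdegree (fls_X * p + 1) = 0"
    using c z by (intro fls_subdegree_eqI) auto
  ultimately show ?thesis by simp
qed

lemma J_step:
  assumes "J n" shows "J (Suc (Suc n))"
proof -
  define p where "p = P n"
  define a where "a = P (Suc (Suc n))"
  define U where "U = fls_X * p + 1"
  define V where "V = fls_X * Tf + 1"
  have pneg: "\<And>k. k < 0 \<Longrightarrow> p $$ k = 0" using J_coeff[OF assms] Tf_nth_neg unfolding p_def by simp
  have p0: "p $$ 0 = 1" using J_coeff[OF assms, of 0] Tf_nth0 unfolding p_def by simp
  have pnz: "p \<noteq> 0" using p0 by (intro fls_nonzeroI[of _ 0]) simp
  have U: "U \<noteq> 0" "fls_subdegree U = 0" using unit0[OF pneg p0] unfolding U_def by auto
  have V: "V \<noteq> 0" "fls_subdegree V = 0" using unit0[of Tf] Tf_nth_neg Tf_nth0 unfolding V_def by auto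
  have aeq: "a = 1 + fls_X / (1 + inverse fls_X / p)" unfolding a_def p_def by (simp add: PS QS)
  have h1: "(a - 1) * U = fls_X^2 * p"
    unfolding aeq U_def by (rule step_eq) (use pnz U in \<open>auto simp: U_def\<close>)
  have h2: "(Tf - 1) * V = fls_X^2 * Tf" unfolding V_def by (rule Tf_step)
  have "(a - Tf) * (U * V) = (a - 1) * U * V - (Tf - 1) * V * U" by (simp add: algebra_simps)
  also have "\<dots> = fls_X^2 * p * V - fls_X^2 * Tf * U" by (simp only: h1 h2)
  also have "\<dots> = fls_X^2 * (p - Tf)" by (simp add: U_def V_def algebra_simps)
  finally have key: "(a - Tf) * (U * V) = fls_X^2 * (p - Tf)" .
  have UV: "U * V \<noteq> 0" "fls_subdegree (U * V) = 0" using U V by auto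
  show ?thesis
  proof (cases "p = Tf")
    case True
    then have "(a - Tf) * (U * V) = 0" using key by simp
    then have "a = Tf" using UV by simp
    then show ?thesis unfolding J_def a_def by simp
  next
    case False
    then have D: "p - Tf \<noteq> 0" by simp
    have Dsd: "int n \<le> fls_subdegree (p - Tf)" "1 \<le> fls_subdegree (p - Tf)"
      using assms False unfolding J_def p_def by auto
    have r: "fls_X^2 * (p - Tf) \<noteq> 0" using D by simp
    then have anz: "a - Tf \<noteq> 0" using key by auto
    have "fls_subdegree ((a - Tf) * (U * V)) = fls_subdegree (a - Tf)"
      using anz UV by simp
    moreover have "fls_subdegree (fls_X^2 * (p - Tf)) = 2 + fls_subdegree (p - Tf)"
      using D by simp
    ultimately have "fls_subdegree (a - Tf) = 2 + fls_subdegree (p - Tf)" using key by simp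
    then show ?thesis using Dsd unfolding J_def a_def by auto
  qed
qed

lemma J0: "J 0"
proof -
  have "1 - Tf = 0 \<or> 1 \<le> fls_subdegree (1 - Tf)"
  proof (cases "1 - Tf = 0")
    case False
    have "\<And>k. k < 1 \<Longrightarrow> (1 - Tf) $$ k = 0"
      proof -
      fix k :: int assume "k < 1"
      then have "k < 0 \<or> k = 0" by arith
      then show "?thesis k" using Tf_nth_neg Tf_nth0 by auto
    qed
    then show ?thesis using False by (intro disjI2 fls_subdegree_geI) auto
  qed simp
  then show ?thesis unfolding J_def P0 by auto
qed

lemma J1: "J (Suc 0)"
proof -
  have P1: "P (Suc 0) = 1 + fls_X" using PS[of 0] Q0 by simp
  have "1 + fls_X - Tf = 0 \<or> 1 \<le> fls_subdegree (1 + fls_X - Tf)"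
  proof (cases "1 + fls_X - Tf = 0")
    case False
    have "\<And>k. k < 1 \<Longrightarrow> (1 + fls_X - Tf) $$ k = 0"
      proof -
      fix k :: int assume "k < 1"
      then have "k < 0 \<or> k = 0" by arith
      then show "?thesis k" using Tf_nth_neg Tf_nth0 by auto
    qed
    then show ?thesis using False by (intro disjI2 fls_subdegree_geI) auto
  qed simp
  then show ?thesis unfolding J_def P1 by auto
qed

lemma J_all: "J n"
proof -
  have "J n \<and> J (Suc n)" by (induction n) (auto simp: J0 J1 J_step)
  then show ?thesis by simp
qed

lemma P_coeff: "int k < int n \<Longrightarrow> P n $$ int k = Tf $$ int k"
  using J_coeff[OF J_all] by simp



lemma cf_value_Cons: "ys \<noteq> [] \<Longrightarrow> cf_value (a # ys) = of_nat a + 1 / cf_value ys"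
  by (cases ys) auto

lemma cf_ge1: "xs \<noteq> [] \<Longrightarrow> \<forall>a\<in>set xs. a \<ge> 1 \<Longrightarrow> cf_value xs \<ge> 1"
proof (induction xs)
  case Nil then show ?case by simp
next
  case (Cons a t)
  show ?case
  proof (cases "t = []")
    case True then show ?thesis using Cons by simp
  next
    case False
    then have "cf_value t \<ge> 1" using Cons by simp
    then have "1 / cf_value t \<ge> 0" by simp
    moreover have "(of_nat a :: rat) \<ge> 1" using Cons by simp
    moreover have "cf_value (a # t) = of_nat a + 1 / cf_value t" using False by (rule cf_value_Cons)
    ultimately show ?thesis by linarith
  qed
qed

lemma cf_gt1: assumes "t \<noteq> []" "t \<noteq> [1]" "\<forall>a\<in>set t. a \<ge> 1" shows "cf_value t > 1"
proof (cases t)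
  case Nil then show ?thesis using assms by simp
next
  case (Cons b s)
  show ?thesis
  proof (cases "s = []")
    case True
    then have "b \<ge> 2" using assms Cons by auto
    then show ?thesis using True Cons by simp
  next
    case False
    then have "cf_value s \<ge> 1" using assms Cons by (intro cf_ge1) auto
    then have "1 / cf_value s > 0" by simp
    moreover have "(of_nat b :: rat) \<ge> 1" using assms Cons by simp
    moreover have "cf_value t = of_nat b + 1 / cf_value s" using False Cons by (simp add: cf_value_Cons)
    ultimately show ?thesis by linarith
  qed
qed

lemma cf_bounds:
  assumes t: "t \<noteq> []" and all: "\<forall>x\<in>set (a # t). x \<ge> 1"
  shows "of_nat a < cf_value (a # t)"
    and "t = [1] \<Longrightarrow> cf_value (a # t) = of_nat a + 1"
    and "t \<noteq> [1] \<Longrightarrow> cf_value (a # t) < of_nat a + 1"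
proof -
  have v: "cf_value t \<ge> 1" using t all by (intro cf_ge1) auto
  show "of_nat a < cf_value (a # t)" using v t by (simp add: cf_value_Cons)
  show "t = [1] \<Longrightarrow> cf_value (a # t) = of_nat a + 1" by simp
  assume "t \<noteq> [1]"
  then have "cf_value t > 1" using t all by (intro cf_gt1) auto
  then have "1 / cf_value t < 1" by simp
  then show "cf_value (a # t) < of_nat a + 1" using t by (simp add: cf_value_Cons)
qed

lemma nat_between:
  fixes v :: rat
  assumes "of_nat c < v" "v < of_nat c + 1" "of_nat a < v" "v < of_nat a + 1"
  shows "a = c"
proof -
  have "of_nat c < (of_nat (a+1) :: rat)" "of_nat a < (of_nat (c+1) :: rat)" using assms by auto
  then have "c < a + 1" "a < c + 1" by (simp_all only: of_nat_less_iff)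
  then show ?thesis by simp
qed

lemma nat_not_between:
  assumes "(of_nat c :: rat) < of_nat a" "(of_nat a :: rat) < of_nat c + 1"
  shows False
proof -
  have "of_nat c < (of_nat a :: rat)" "of_nat a < (of_nat (c+1) :: rat)" using assms by auto
  then have "c < a" "a < c + 1" by (simp_all only: of_nat_less_iff)
  then show ?thesis by simp
qed

lemma cf_unique:
  "xs \<noteq> [] \<Longrightarrow> ys \<noteq> [] \<Longrightarrow> \<forall>x\<in>set xs. x \<ge> 1 \<Longrightarrow> \<forall>x\<in>set ys. x \<ge> 1 \<Longrightarrow>
   even (length xs) = even (length ys) \<Longrightarrow> cf_value xs = cf_value ys \<Longrightarrow> xs = ys"
proof (induction xs arbitrary: ys)
  case Nil then show ?case by simp
next
  case (Cons a t)
  obtain c s where ys: "ys = c # s" using Cons.prems by (cases ys) auto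
  have allx: "\<forall>x\<in>set (a # t). x \<ge> 1" and ally: "\<forall>x\<in>set (c # s). x \<ge> 1"
    using Cons.prems ys by auto
  have eq: "cf_value (a # t) = cf_value (c # s)" using Cons.prems ys by simp
  have par: "even (length t) = even (length s)" using Cons.prems ys by simp
  show ?case
  proof (cases "t = []")
    case tn: True
    show ?thesis
    proof (cases "s = []")
      case True then show ?thesis using tn eq ys by simp
    next
      case False
      then have "s \<noteq> [1]" using par tn by auto
      then have "of_nat c < cf_value (c # s)" "cf_value (c # s) < of_nat c + 1"
        using cf_bounds[OF False ally] by auto
      then show ?thesis using eq tn nat_not_between[of c a] by simp
    qed
  next
    case tnn: False
    show ?thesis
    proof (cases "s = []")
      case True
      then have "t \<noteq> [1]" using par tnn by auto
      then have "of_nat a < cf_value (a # t)" "cf_value (a # t) < of_nat a + 1"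
        using cf_bounds[OF tnn allx] by auto
      then show ?thesis using eq True nat_not_between[of a c] by simp
    next
      case snn: False
      note ba = cf_bounds[OF tnn allx] and bc = cf_bounds[OF snn ally]
      show ?thesis
      proof (cases "t = [1]")
        case t1: True
        show ?thesis
        proof (cases "s = [1]")
          case True then show ?thesis using t1 eq ys by simp
        next
          case False
          have "(of_nat c::rat) < of_nat (a+1)" "(of_nat (a+1)::rat) < of_nat c + 1"
            using ba(2)[OF t1] bc(1) bc(3)[OF False] eq by simp_all
          then show ?thesis using nat_not_between by blast
        qed
      next
        case t1: False
        show ?thesis
        proof (cases "s = [1]")
          case True
          have "(of_nat a::rat) < of_nat (c+1)" "(of_nat (c+1)::rat) < of_nat a + 1"
            using bc(2)[OF True] ba(1) ba(3)[OF t1] eq by simp_all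
          then show ?thesis using nat_not_between by blast
        next
          case s1: False
          have ac: "a = c" using nat_between[OF bc(1) bc(3)[OF s1]] ba(1) ba(3)[OF t1] eq by simp
          then have "1 / cf_value t = 1 / cf_value s" using eq tnn snn by (simp add: cf_value_Cons)
          then have "cf_value t = cf_value s" by simp
          then have "t = s" using Cons.IH[OF tnn snn] allx ally par by simp
          then show ?thesis using ac ys by simp
        qed
      qed
    qed
  qed
qed

lemma even_cf_eq:
  assumes "xs \<noteq> []" "even (length xs)" "\<forall>a\<in>set xs. a \<ge> 1"
  shows "even_cf (cf_value xs) = xs"
  unfolding even_cf_def
  by (rule the_equality) (use assms cf_unique in auto)



lemma qcf_Cons: "ys \<noteq> [] \<Longrightarrow> qcf s (a # ys) =
   (if s then qint a + fls_X powi (int a) / qcf False ys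
         else qint_inv a + fls_X powi (- int a) / qcf True ys)"
  by (cases ys) auto

lemma qcf_app2: "qcf s (xs @ [2]) = qcf s (xs @ [1,1])"
proof (induction xs arbitrary: s)
  case Nil
  have "qint 2 = 1 + fls_X" unfolding qint_def by (simp add: eval_nat_numeral)
  moreover have "qint_inv 2 = 1 + inverse fls_X" unfolding qint_inv_def by (simp add: eval_nat_numeral power_int_minus)
  ultimately show ?case by (simp add: qint1 qint_inv1)
next
  case (Cons a xs)
  then show ?case by (simp add: qcf_Cons)
qed

lemma cf_app2: "cf_value (xs @ [2]) = cf_value (xs @ [1,1])"
proof (induction xs)
  case Nil then show ?case by simp
next
  case (Cons a xs)
  then show ?case by (simp add: cf_value_Cons)
qed

lemma phi_facts:
  fixes \<phi> :: real
  defines "\<phi> \<equiv> (1 + sqrt 5) / 2"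
  shows "\<phi> * \<phi> = \<phi> + 1" "1 < \<phi>" "\<phi> < 2"
proof -
  have s: "sqrt 5 * sqrt 5 = (5::real)" by simp
  show "\<phi> * \<phi> = \<phi> + 1" unfolding \<phi>_def using s by (simp add: field_simps)
  have "sqrt 5 > (1::real)" by simp
  then show "1 < \<phi>" unfolding \<phi>_def by simp
  have "\<not> sqrt 5 \<ge> (3::real)"
  proof
    assume h: "sqrt 5 \<ge> (3::real)"
    have "3 * 3 \<le> sqrt 5 * sqrt (5::real)" by (rule mult_mono) (use h in auto)
    then show False using s by simp
  qed
  then have "sqrt 5 < (3::real)" by simp
  then show "\<phi> < 2" unfolding \<phi>_def by simp
qed

lemma cf_rem_phi:
  fixes \<phi> :: real
  defines "\<phi> \<equiv> (1 + sqrt 5) / 2"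
  shows "cf_rem \<phi> n = \<phi>"
proof (induction n)
  case 0 then show ?case by simp
next
  case (Suc n)
  note f = phi_facts[folded \<phi>_def]
  have fl: "\<lfloor>\<phi>\<rfloor> = 1" using f by (simp add: floor_eq_iff)
  have "1 / (\<phi> - 1) = \<phi>" using f by (simp add: field_simps)
  then show ?case using Suc fl by simp
qed

lemma convergent_phi:
  fixes \<phi> :: real
  defines "\<phi> \<equiv> (1 + sqrt 5) / 2"
  shows "convergent \<phi> n = cf_value (replicate n 1)"
proof -
  have fl: "\<lfloor>\<phi>\<rfloor> = 1" using phi_facts[folded \<phi>_def] by (simp add: floor_eq_iff)
  have "cf_term \<phi> i = 1" for i unfolding cf_term_def using cf_rem_phi[folded \<phi>_def] fl by simp
  then have "map (cf_term \<phi>) xs = map (\<lambda>_. 1) xs" for xs by (induct xs) auto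
  then have "map (cf_term \<phi>) [0..<n] = replicate n 1"
    by (simp add: map_replicate_const)
  then show ?thesis unfolding convergent_def by simp
qed

lemma qrat_P: "qrat (cf_value (replicate (Suc n) 1)) = P n"
proof (cases n)
  case 0 then show ?thesis by (simp add: qrat_def P_def qint1)
next
  case (Suc m)
  have all: "\<forall>a\<in>set (replicate (Suc n) (1::nat)). a \<ge> 1" by simp
  have ne1: "cf_value (replicate (Suc n) 1) \<noteq> 1"
    using cf_gt1[of "replicate (Suc n) 1"] Suc by simp
  show ?thesis
  proof (cases "even (Suc n)")
    case True
    then have "even_cf (cf_value (replicate (Suc n) 1)) = replicate (Suc n) 1"
      by (intro even_cf_eq) auto
    then show ?thesis using ne1 by (simp add: qrat_def P_def)
  next
    case False
    then obtain k where k: "n = Suc (Suc k)" using Suc by (cases m) auto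
    define L where "L = replicate (Suc k) (1::nat) @ [2]"
    have R: "replicate (Suc n) (1::nat) = replicate (Suc k) 1 @ [1,1]"
      unfolding k by (simp add: replicate_append_same[symmetric])
    have cv: "cf_value L = cf_value (replicate (Suc n) 1)" unfolding L_def R by (rule cf_app2)
    have "even_cf (cf_value L) = L"
      using False k unfolding L_def by (intro even_cf_eq) auto
    then have "even_cf (cf_value (replicate (Suc n) 1)) = L" using cv by simp
    moreover have "qcf True L = P n" unfolding L_def P_def R by (rule qcf_app2)
    ultimately show ?thesis using ne1 by (simp add: qrat_def)
  qed
qed

lemma coeff_limit:
  fixes \<phi> :: real
  defines "\<phi> \<equiv> (1 + sqrt 5) / 2"
  shows "qreal_coeff \<phi> k = real_of_rat (Tf $$ int k)"
proof -
  have ev: "\<forall>\<^sub>F n in sequentially.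
      real_of_rat (fls_nth (qrat (convergent \<phi> (Suc n))) (int k)) = real_of_rat (Tf $$ int k)"
    unfolding eventually_sequentially
  proof (intro exI[of _ "Suc k"] allI impI)
    fix n assume "Suc k \<le> n"
    then have "P n $$ int k = Tf $$ int k" using P_coeff[of k n] by simp
    then show "real_of_rat (fls_nth (qrat (convergent \<phi> (Suc n))) (int k)) = real_of_rat (Tf $$ int k)"
      unfolding \<phi>_def convergent_phi qrat_P by simp
  qed
  have "(\<lambda>n. real_of_rat (fls_nth (qrat (convergent \<phi> (Suc n))) (int k))) \<longlonglongrightarrow> real_of_rat (Tf $$ int k)"
    by (rule tendsto_eventually[OF ev])
  then show ?thesis unfolding qreal_coeff_def by (rule limI)
qed

theorem proposition4p1:
  fixes \<phi> :: real
  defines "\<phi> \<equiv> (1 + sqrt 5) / 2"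
  shows "qreal_coeff \<phi> 0 = 1 \<and> qreal_coeff \<phi> 1 = 0 \<and>
         (\<forall>k\<ge>2. qreal_coeff \<phi> k = (-1) ^ k * real (gcat (k - 1)))"
proof (intro conjI allI impI)
  show "qreal_coeff \<phi> 0 = 1" using coeff_limit[of 0] Tf_nth0 unfolding \<phi>_def by simp
  show "qreal_coeff \<phi> 1 = 0" using coeff_limit[of 1] Tf_nth1 unfolding \<phi>_def by simp
  fix k :: nat assume "2 \<le> k"
  then show "qreal_coeff \<phi> k = (-1) ^ k * real (gcat (k - 1))"
    using coeff_limit[of k] Tf_nth_ge2[of k] unfolding \<phi>_def
    by (simp add: of_rat_mult of_rat_power)
qed

end
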